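(* Let $\mathcal{E}$ be an even Dirichlet form on $L^2(X,m)$ and let $\mathfrak{D}$ be its Dirichlet space. Assume that the embedding $\mathfrak{D}\hookrightarrow L^2(X,m)$ is compact and that, for $f\in L^2(X,m)$, $\mathcal{E}(f)=0$ holds if and only if $f=0$. Then $\mathfrak{D}$ satisfies a Poincaré inequality: there is a constant $C>0$ such that $\|f\|_{\mathfrak{D}}\le C\,|f|_{\mathfrak{D}}$ for all $f\in\mathfrak{D}$ (equivalently, there is $C>0$ with $\|f\|_{L^2(X,m)}\le C\,|f|_{\mathfrak{D}}$ for all $f\in\mathfrak{D}$).
   Context: Standing setting: $X$ is a Hausdorff topological space and $m$ is a Borel measure on $X$ with full support, i.e. no nonempty open subset of $X$ has $m$-measure zero. $L^2(X,m)$ is the real $L^2$ space. A Dirichlet form is a functional $\mathcal{E}:L^2(X,m)\to[0,\infty]$ that is convex, lower semicontinuous and densely defined (its effective domain $\mathrm{dom}(\mathcal{E})=\{u:\mathcal{E}(u)<\infty\}$ is dense in $L^2(X,m)$), and such that for all $u,v\in L^2(X,m)$ and $\alpha>0$: (1) $\mathcal{E}(u\wedge v)+\mathcal{E}(u\vee v)\le \mathcal{E}(u)+\mathcal{E}(v)$; (2) $\mathcal{E}\big(v+\tfrac12((u-v+\alpha)_+-(u-v-\alpha)_-)\big)+\mathcal{E}\big(u-\tfrac12((u-v+\alpha)_+-(u-v-\alpha)_-)\big)\le \mathcal{E}(u)+\mathcal{E}(v)$, where $(\cdot)_+$, $(\cdot)_-$ denote positive and negative parts. $\mathcal{E}$ is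 called even if $\mathcal{E}(0)=0$ and $\mathcal{E}(-u)=\mathcal{E}(u)$ for all $u$. Set $\mathcal{E}_1(u)=\|u\|_{L^2(X,m)}^2+\mathcal{E}(u)$. The Dirichlet space is $\mathfrak{D}=\{u\in L^2(X,m):\exists\lambda>0,\ \mathcal{E}_1(\lambda u)<\infty\}$ with the Minkowski norm $\|u\|_{\mathfrak{D}}=\inf\{\lambda>0:\mathcal{E}_1(u/\lambda)\le 1\}$ and the seminorm $|u|_{\mathfrak{D}}=\inf\{\lambda>0:\mathcal{E}(u/\lambda)\le 1\}$. *)

theory Defs
  imports "HOL-Analysis.Analysis"
begin

text \<open>The real space L^2(X,m) is represented by square-integrable Borel functions;
  functionals on L^2 are required to be invariant under a.e. equality
  (so that they are functionals on equivalence classes).\<close>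

definition L2 :: "'a measure \<Rightarrow> ('a \<Rightarrow> real) set" where
  "L2 M = {f. f \<in> borel_measurable M \<and> integrable M (\<lambda>x. (f x)^2)}"

definition L2norm :: "'a measure \<Rightarrow> ('a \<Rightarrow> real) \<Rightarrow> real" where
  "L2norm M f = sqrt (\<integral>x. (f x)^2 \<partial>M)"

definition L2_tendsto :: "'a measure \<Rightarrow> (nat \<Rightarrow> 'a \<Rightarrow> real) \<Rightarrow> ('a \<Rightarrow> real) \<Rightarrow> bool" where
  "L2_tendsto M u g \<longleftrightarrow> (\<lambda>n. L2norm M (\<lambda>x. u n x - g x)) \<longlonglongrightarrow> 0"

definition pos_part :: "real \<Rightarrow> real" where "pos_part w = max w 0"
definition neg_part :: "real \<Rightarrow> real" where "neg_part w = max (- w) 0"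

definition dirichlet_form :: "'a measure \<Rightarrow> (('a \<Rightarrow> real) \<Rightarrow> ennreal) \<Rightarrow> bool" where
  "dirichlet_form M E \<longleftrightarrow>
     \<comment> \<open>well defined on L^2 equivalence classes\<close>
     (\<forall>u\<in>L2 M. \<forall>v\<in>L2 M. (AE x in M. u x = v x) \<longrightarrow> E u = E v)
     \<comment> \<open>convex\<close>
   \<and> (\<forall>u\<in>L2 M. \<forall>v\<in>L2 M. \<forall>t::real. 0 \<le> t \<and> t \<le> 1 \<longrightarrow>
        E (\<lambda>x. t * u x + (1 - t) * v x) \<le> ennreal t * E u + ennreal (1 - t) * E v)
     \<comment> \<open>lower semicontinuous w.r.t. the L^2 norm\<close>
   \<and> (\<forall>u g. (\<forall>n. u n \<in> L2 M) \<and> g \<in> L2 M \<and> L2_tendsto M u g \<longrightarrow>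
        E g \<le> liminf (\<lambda>n. E (u n)))
     \<comment> \<open>densely defined\<close>
   \<and> (\<forall>u\<in>L2 M. \<forall>\<epsilon>>0. \<exists>v\<in>L2 M. E v < \<infinity> \<and> L2norm M (\<lambda>x. u x - v x) < \<epsilon>)
     \<comment> \<open>condition (1)\<close>
   \<and> (\<forall>u\<in>L2 M. \<forall>v\<in>L2 M.
        E (\<lambda>x. min (u x) (v x)) + E (\<lambda>x. max (u x) (v x)) \<le> E u + E v)
     \<comment> \<open>condition (2)\<close>
   \<and> (\<forall>u\<in>L2 M. \<forall>v\<in>L2 M. \<forall>\<alpha>::real. \<alpha> > 0 \<longrightarrow>
        E (\<lambda>x. v x + (pos_part (u x - v x + \<alpha>) - neg_part (u x - v x - \<alpha>)) / 2)
      + E (\<lambda>x. u x - (pos_part (u x - v x + \<alpha>) - neg_part (u x - v x - \<alpha>)) / 2)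
        \<le> E u + E v)"

definition even_form :: "'a measure \<Rightarrow> (('a \<Rightarrow> real) \<Rightarrow> ennreal) \<Rightarrow> bool" where
  "even_form M E \<longleftrightarrow> E (\<lambda>x. 0) = 0 \<and> (\<forall>u\<in>L2 M. E (\<lambda>x. - u x) = E u)"

definition E1 :: "'a measure \<Rightarrow> (('a \<Rightarrow> real) \<Rightarrow> ennreal) \<Rightarrow> ('a \<Rightarrow> real) \<Rightarrow> ennreal" where
  "E1 M E u = ennreal ((L2norm M u)^2) + E u"

definition dirichlet_space :: "'a measure \<Rightarrow> (('a \<Rightarrow> real) \<Rightarrow> ennreal) \<Rightarrow> ('a \<Rightarrow> real) set" where
  "dirichlet_space M E = {u \<in> L2 M. \<exists>lam::real. lam > 0 \<and> E1 M E (\<lambda>x. lam * u x) < \<infinity>}"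

definition D_norm :: "'a measure \<Rightarrow> (('a \<Rightarrow> real) \<Rightarrow> ennreal) \<Rightarrow> ('a \<Rightarrow> real) \<Rightarrow> real" where
  "D_norm M E u = Inf {lam::real. lam > 0 \<and> E1 M E (\<lambda>x. u x / lam) \<le> 1}"

definition D_seminorm :: "'a measure \<Rightarrow> (('a \<Rightarrow> real) \<Rightarrow> ennreal) \<Rightarrow> ('a \<Rightarrow> real) \<Rightarrow> real" where
  "D_seminorm M E u = Inf {lam::real. lam > 0 \<and> E (\<lambda>x. u x / lam) \<le> 1}"

definition compact_embedding :: "'a measure \<Rightarrow> (('a \<Rightarrow> real) \<Rightarrow> ennreal) \<Rightarrow> bool" where
  "compact_embedding M E \<longleftrightarrow>
     (\<forall>f. (\<forall>n. f n \<in> dirichlet_space M E) \<and> (\<exists>B::real. \<forall>n. D_norm M E (f n) \<le> B) \<longrightarrow>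
        (\<exists>(r::nat \<Rightarrow> nat) g. strict_mono r \<and> g \<in> L2 M \<and> L2_tendsto M (f \<circ> r) g))"

end

theory Submission
  imports Defs
begin

lemma L2_scale: "f \<in> L2 M \<Longrightarrow> (\<lambda>x. c * f x) \<in> L2 M"
  unfolding L2_def by (auto simp: power_mult_distrib)

lemma L2_div: "f \<in> L2 M \<Longrightarrow> (\<lambda>x. f x / c) \<in> L2 M"
  using L2_scale[of f M "1/c"] by simp

lemma L2norm_scale_sq: "(L2norm M (\<lambda>x. c * f x))^2 = c^2 * (L2norm M f)^2"
proof -
  have i: "(\<integral>x. (c * f x)^2 \<partial>M) = c^2 * (\<integral>x. (f x)^2 \<partial>M)"
    by (simp add: power_mult_distrib)
  have "0 \<le> (\<integral>x. (f x)^2 \<partial>M)" by simp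
  then show ?thesis unfolding L2norm_def i by simp
qed

lemma E_scale:
  assumes DF: "dirichlet_form M E" and E0: "E (\<lambda>x. 0) = 0" and h: "h \<in> L2 M"
    and s: "0 \<le> s" "s \<le> 1"
  shows "E (\<lambda>x. s * h x) \<le> ennreal s * E h"
proof -
  have z: "(\<lambda>x. 0::real) \<in> L2 M" unfolding L2_def by simp
  have conv: "\<forall>u\<in>L2 M. \<forall>v\<in>L2 M. \<forall>t::real. 0 \<le> t \<and> t \<le> 1 \<longrightarrow>
        E (\<lambda>x. t * u x + (1 - t) * v x) \<le> ennreal t * E u + ennreal (1 - t) * E v"
    using DF unfolding dirichlet_form_def by blast
  have "E (\<lambda>x. s * h x + (1 - s) * 0) \<le> ennreal s * E h + ennreal (1 - s) * E (\<lambda>x. 0)"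
    using conv[rule_format, OF h z, of s] s by simp
  then show ?thesis using E0 by simp
qed

lemma E1_scale:
  assumes DF: "dirichlet_form M E" and E0: "E (\<lambda>x. 0) = 0" and h: "h \<in> L2 M"
    and s: "0 \<le> s" "s \<le> 1"
  shows "E1 M E (\<lambda>x. s * h x) \<le> ennreal s * E1 M E h"
proof -
  have a: "(L2norm M (\<lambda>x. s * h x))^2 \<le> s * (L2norm M h)^2"
  proof -
    have "s^2 \<le> s" using s by (simp add: power2_eq_square mult_left_le)
    then have "s^2 * (L2norm M h)^2 \<le> s * (L2norm M h)^2" by (simp add: mult_right_mono)
    then show ?thesis by (simp add: L2norm_scale_sq)
  qed
  have "ennreal ((L2norm M (\<lambda>x. s * h x))^2) \<le> ennreal s * ennreal ((L2norm M h)^2)"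
    using a s by (simp add: ennreal_mult'[symmetric] ennreal_leI)
  moreover have "E (\<lambda>x. s * h x) \<le> ennreal s * E h" using E_scale[OF DF E0 h s] .
  ultimately show ?thesis unfolding E1_def by (simp add: distrib_left add_mono)
qed

lemma S_nonempty:
  assumes DF: "dirichlet_form M E" and E0: "E (\<lambda>x. 0) = 0" and f: "f \<in> dirichlet_space M E"
  shows "\<exists>lam>0. E1 M E (\<lambda>x. f x / lam) \<le> 1"
proof -
  obtain l where l: "l > 0" "E1 M E (\<lambda>x. l * f x) < \<infinity>" and fL: "f \<in> L2 M"
    using f unfolding dirichlet_space_def by auto
  have hL: "(\<lambda>x. l * f x) \<in> L2 M" using L2_scale[OF fL] .
  obtain k where k: "0 \<le> k" "E1 M E (\<lambda>x. l * f x) = ennreal k"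
    using l(2) by (cases "E1 M E (\<lambda>x. l * f x)" rule: ennreal_cases) auto
  define s where "s = 1 / (k + 1)"
  have s: "0 \<le> s" "s \<le> 1" using k by (auto simp: s_def)
  have eq: "(\<lambda>x. f x / ((k+1)/l)) = (\<lambda>x. s * (l * f x))"
    using l k by (auto simp: s_def field_simps)
  have "E1 M E (\<lambda>x. f x / ((k+1)/l)) \<le> ennreal s * ennreal k"
    unfolding eq using E1_scale[OF DF E0 hL s] k by simp
  also have "\<dots> = ennreal (k / (k+1))" using s k by (simp add: ennreal_mult'[symmetric] s_def)
  also have "\<dots> \<le> 1" using k by simp
  finally show ?thesis using l k by (intro exI[of _ "(k+1)/l"]) auto
qed

lemma S_up:
  assumes DF: "dirichlet_form M E" and E0: "E (\<lambda>x. 0) = 0" and f: "f \<in> L2 M"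
    and mu: "mu > 0" "E1 M E (\<lambda>x. f x / mu) \<le> 1" "mu \<le> mu'"
  shows "E1 M E (\<lambda>x. f x / mu') \<le> 1"
proof -
  have eq: "(\<lambda>x. f x / mu') = (\<lambda>x. (mu/mu') * (f x / mu))" using mu by auto
  have s: "0 \<le> mu/mu'" "mu/mu' \<le> 1" using mu by auto
  have "E1 M E (\<lambda>x. f x / mu') \<le> ennreal (mu/mu') * E1 M E (\<lambda>x. f x / mu)"
    unfolding eq by (rule E1_scale[OF DF E0 L2_div[OF f] s])
  also have "\<dots> \<le> ennreal 1 * 1" using s mu by (intro mult_mono) auto
  finally show ?thesis by simp
qed

theorem mainTheorem2:
  fixes M :: "'a::t2_space measure" and E :: "('a \<Rightarrow> real) \<Rightarrow> ennreal"
  assumes borel: "sets M = sets borel"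
    and full_support: "\<forall>U. open U \<and> U \<noteq> {} \<longrightarrow> emeasure M U \<noteq> 0"
    and DF: "dirichlet_form M E"
    and even: "even_form M E"
    and compact: "compact_embedding M E"
    and kernel: "\<forall>f\<in>L2 M. E f = 0 \<longleftrightarrow> (AE x in M. f x = 0)"
  shows "\<exists>C>0. \<forall>f\<in>dirichlet_space M E. D_norm M E f \<le> C * D_seminorm M E f"
proof (rule ccontr)
  assume neg: "\<not> ?thesis"
  have E0: "E (\<lambda>x. 0) = 0" using even unfolding even_form_def by simp
  define S where "S f = {lam::real. lam > 0 \<and> E1 M E (\<lambda>x. f x / lam) \<le> 1}" for f
  define T where "T f = {lam::real. lam > 0 \<and> E (\<lambda>x. f x / lam) \<le> 1}" for f
  have Dn: "D_norm M E f = Inf (S f)" for f unfolding S_def D_norm_def ..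
  have Ds: "D_seminorm M E f = Inf (T f)" for f unfolding T_def D_seminorm_def ..
  have bS: "bdd_below (S f)" for f unfolding S_def by (rule bdd_belowI[of _ 0]) auto
  have ST: "S f \<subseteq> T f" for f
  proof
    fix l assume "l \<in> S f"
    moreover have "E (\<lambda>x. f x / l) \<le> E1 M E (\<lambda>x. f x / l)" unfolding E1_def by simp
    ultimately show "l \<in> T f" unfolding S_def T_def by auto
  qed
  have "\<forall>n::nat. \<exists>f. f \<in> dirichlet_space M E \<and> (real n + 1) * D_seminorm M E f < D_norm M E f"
  proof
    fix n :: nat
    have "real n + 1 > 0" by simp
    then show "\<exists>f. f \<in> dirichlet_space M E \<and> (real n + 1) * D_seminorm M E f < D_norm M E f"
      using neg by (meson not_le)
  qed
  then obtain F where F: "\<And>n. F n \<in> dirichlet_space M E"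
    "\<And>n. (real n + 1) * D_seminorm M E (F n) < D_norm M E (F n)" by metis
  define a where "a n = D_norm M E (F n)" for n
  have FL: "F n \<in> L2 M" for n using F(1) unfolding dirichlet_space_def by auto
  have Sne: "S (F n) \<noteq> {}" for n using S_nonempty[OF DF E0 F(1)[of n]] unfolding S_def by auto
  have Tne: "T (F n) \<noteq> {}" for n using Sne ST by blast
  have Ds0: "0 \<le> D_seminorm M E (F n)" for n
    unfolding Ds by (rule cInf_greatest[OF Tne]) (auto simp: T_def)
  have apos: "a n > 0" for n
    using F(2)[of n] Ds0[of n] unfolding a_def
    by (smt (verit) mult_nonneg_nonneg of_nat_0_le_iff)
  have "\<exists>mu\<in>T (F n). mu < a n / (real n + 1)" for n
  proof -
    have "D_seminorm M E (F n) < a n / (real n + 1)"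
      using F(2)[of n] unfolding a_def by (simp add: field_simps)
    then show ?thesis unfolding Ds using cInf_lessD[OF Tne] by blast
  qed
  then obtain mu where mu: "\<And>n. mu n \<in> T (F n)" "\<And>n. mu n < a n / (real n + 1)" by metis
  define g where "g n = (\<lambda>x. F n x / a n)" for n
  have gL: "g n \<in> L2 M" for n unfolding g_def by (rule L2_div[OF FL])
  have g2: "E1 M E (\<lambda>x. g n x / 2) \<le> 1" for n
  proof -
    have "Inf (S (F n)) < 2 * a n" using apos[of n] unfolding a_def Dn by simp
    then obtain l where l: "l \<in> S (F n)" "l < 2 * a n" using cInf_lessD[OF Sne] by blast
    have "E1 M E (\<lambda>x. F n x / (2 * a n)) \<le> 1"
      using S_up[OF DF E0 FL[of n], of l "2 * a n"] l unfolding S_def by auto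
    moreover have "(\<lambda>x. g n x / 2) = (\<lambda>x. F n x / (2 * a n))" unfolding g_def by auto
    ultimately show ?thesis by simp
  qed
  have gD: "g n \<in> dirichlet_space M E" for n
  proof -
    have "(\<lambda>x. (1/2) * g n x) = (\<lambda>x. g n x / 2)" by auto
    then have "E1 M E (\<lambda>x. (1/2) * g n x) \<le> 1" using g2[of n] by simp
    then have "E1 M E (\<lambda>x. (1/2) * g n x) < \<infinity>"
      by (rule le_less_trans) simp
    then show ?thesis unfolding dirichlet_space_def using gL[of n]
      by (intro CollectI conjI exI[of _ "1/2"]) auto
  qed
  have gN: "D_norm M E (g n) \<le> 2" for n
  proof -
    have "2 \<in> S (g n)" using g2 unfolding S_def by auto
    then show ?thesis unfolding Dn by (rule cInf_lower[OF _ bS])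
  qed
  have Ebound: "E (\<lambda>x. c * g n x) \<le> ennreal (c / (real n + 1))"
    if c: "0 < c" "c \<le> real n + 1" for c n
  proof -
    define s where "s = c * mu n / a n"
    have mupos: "mu n > 0" using mu(1)[of n] unfolding T_def by auto
    have s0: "0 \<le> s" using c mupos apos[of n] by (simp add: s_def)
    have q: "mu n / a n < 1 / (real n + 1)" using mu(2)[of n] apos[of n] by (simp add: field_simps)
    have "s < c / (real n + 1)" using mult_strict_left_mono[OF q c(1)] by (simp add: s_def)
    then have s1: "s \<le> c / (real n + 1)" by simp
    have "c / (real n + 1) \<le> 1" using c by simp
    then have s2: "s \<le> 1" using s1 by linarith
    have eq: "(\<lambda>x. c * g n x) = (\<lambda>x. s * (F n x / mu n))"
      using mupos apos[of n] unfolding g_def s_def by (auto simp: field_simps)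
    have "E (\<lambda>x. c * g n x) \<le> ennreal s * E (\<lambda>x. F n x / mu n)"
      unfolding eq by (rule E_scale[OF DF E0 L2_div[OF FL] s0 s2])
    also have "\<dots> \<le> ennreal s * 1" using mu(1)[of n] unfolding T_def by (intro mult_left_mono) auto
    also have "\<dots> \<le> ennreal (c / (real n + 1))" using s1 by (simp add: ennreal_leI)
    finally show ?thesis .
  qed
  have cmp: "\<forall>f. (\<forall>n. f n \<in> dirichlet_space M E) \<and> (\<exists>B::real. \<forall>n. D_norm M E (f n) \<le> B) \<longrightarrow>
        (\<exists>(r::nat \<Rightarrow> nat) g. strict_mono r \<and> g \<in> L2 M \<and> L2_tendsto M (f \<circ> r) g)"
    using compact unfolding compact_embedding_def .
  have "\<exists>(r::nat \<Rightarrow> nat) g'. strict_mono r \<and> g' \<in> L2 M \<and> L2_tendsto M (g \<circ> r) g'"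
    apply (rule cmp[rule_format])
    using gD gN by auto
  then obtain r g' where r: "strict_mono r" and g'L: "g' \<in> L2 M" and conv: "L2_tendsto M (g \<circ> r) g'"
    by auto
  have lscall: "\<forall>u g. (\<forall>n. u n \<in> L2 M) \<and> g \<in> L2 M \<and> L2_tendsto M u g \<longrightarrow>
        E g \<le> liminf (\<lambda>n. E (u n))"
    using DF unfolding dirichlet_form_def by (elim conjE) assumption
  have lsc: "E g' \<le> liminf (\<lambda>k. E ((g \<circ> r) k))"
    apply (rule lscall[rule_format])
    using conv gL g'L by (auto simp: o_def)
  have rk: "k \<le> r k" for k using seq_suble[OF r] .
  have "(\<lambda>k. E ((g \<circ> r) k)) \<longlonglongrightarrow> 0"
  proof (rule tendsto_sandwich[of "\<lambda>_. 0" _ _ "\<lambda>k. ennreal (1 / (real k + 1))"])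
    show "\<forall>\<^sub>F k in sequentially. 0 \<le> E ((g \<circ> r) k)" by simp
    show "\<forall>\<^sub>F k in sequentially. E ((g \<circ> r) k) \<le> ennreal (1 / (real k + 1))"
    proof (intro always_eventually allI)
      fix k
      have "E (\<lambda>x. 1 * g (r k) x) \<le> ennreal (1 / (real (r k) + 1))" by (rule Ebound) auto
      also have "\<dots> \<le> ennreal (1 / (real k + 1))"
        using rk[of k] by (intro ennreal_leI divide_left_mono) auto
      finally show "E ((g \<circ> r) k) \<le> ennreal (1 / (real k + 1))" by simp
    qed
    show "(\<lambda>_. 0::ennreal) \<longlonglongrightarrow> 0" by simp
    have "(\<lambda>k. 1 / (real k + 1)) \<longlonglongrightarrow> 0"
      using LIMSEQ_inverse_real_of_nat by (simp add: inverse_eq_divide add.commute)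
    then have "(\<lambda>k. ennreal (1 / (real k + 1))) \<longlonglongrightarrow> ennreal 0" by (rule tendsto_ennrealI)
    then show "(\<lambda>k. ennreal (1 / (real k + 1))) \<longlonglongrightarrow> 0" by simp
  qed
  then have "liminf (\<lambda>k. E ((g \<circ> r) k)) = 0" by (rule lim_imp_Liminf[rotated]) simp
  then have "E g' = 0" using lsc by simp
  then have AE0: "AE x in M. g' x = 0" using kernel g'L by blast
  have "L2norm M (\<lambda>x. g (r k) x - g' x) = L2norm M (g (r k))" for k
  proof -
    have "(\<integral>x. (g (r k) x - g' x)^2 \<partial>M) = (\<integral>x. (g (r k) x)^2 \<partial>M)"
      apply (rule integral_cong_AE)
      using gL[of "r k"] g'L AE0 unfolding L2_def by auto
    then show ?thesis unfolding L2norm_def by simp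
  qed
  then have Lconv: "(\<lambda>k. L2norm M (g (r k))) \<longlonglongrightarrow> 0"
    using conv unfolding L2_tendsto_def by simp
  then obtain K where K: "\<And>k. k \<ge> K \<Longrightarrow> norm (L2norm M (g (r k)) - 0) < 1/4"
    unfolding LIMSEQ_iff by (metis divide_pos_pos zero_less_numeral zero_less_one)
  define k where "k = max K 3"
  define m where "m = r k"
  have m3: "real m \<ge> 3" using rk[of k] unfolding m_def k_def by linarith
  have Lsmall: "\<bar>L2norm M (g m)\<bar> < 1/4" using K[of k] unfolding k_def m_def by auto
  have "(L2norm M (\<lambda>x. 2 * g m x))^2 = 4 * (L2norm M (g m))^2"
    by (simp add: L2norm_scale_sq)
  also have "\<dots> \<le> 1/4"
  proof -
    have "(L2norm M (g m))^2 \<le> (1/4)^2"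
      using Lsmall by (metis abs_ge_zero less_imp_le power2_abs power_mono)
    moreover have "(1/4::real)^2 = 1/16" by (simp add: power2_eq_square)
    ultimately show ?thesis by linarith
  qed
  finally have A: "ennreal ((L2norm M (\<lambda>x. 2 * g m x))^2) \<le> ennreal (1/4)" by (rule ennreal_leI)
  have B: "E (\<lambda>x. 2 * g m x) \<le> ennreal (1/2)"
  proof -
    have "E (\<lambda>x. 2 * g m x) \<le> ennreal (2 / (real m + 1))" by (rule Ebound) (use m3 in auto)
    also have "\<dots> \<le> ennreal (1/2)" using m3 by (intro ennreal_leI) (simp add: field_simps)
    finally show ?thesis .
  qed
  have eq: "(\<lambda>x. F m x / (a m / 2)) = (\<lambda>x. 2 * g m x)" unfolding g_def by auto
  have "E1 M E (\<lambda>x. F m x / (a m / 2)) \<le> ennreal (1/4) + ennreal (1/2)"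
    unfolding eq E1_def using A B by (rule add_mono)
  also have "\<dots> = ennreal (1/4 + 1/2)" by (rule ennreal_plus[symmetric]) auto
  also have "\<dots> \<le> 1" by (simp add: ennreal_le_1)
  finally have "a m / 2 \<in> S (F m)" using apos[of m] unfolding S_def by auto
  then have "a m \<le> a m / 2" unfolding a_def Dn by (rule cInf_lower[OF _ bS])
  then show False using apos[of m] by simp
qed

end
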